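(* Let $f:[0,\infty)\to\mathbb{R}$ be convex with $f(1)=0$ and $G:[0,\mathsf{D_m}(f))\to[0,\infty)$ non-decreasing with $G(0)=0$. Then: (1) for a fixed channel $p_{Y|X}$ between finite alphabets, $I_{G,f}(X;Y)$ is a concave function of the input distribution $p_X$; (2) if $X\to Y\to Z$ is a Markov chain, then $I_{G,f}(X;Y)\ge I_{G,f}(X;Z)$; (3) if $X\to Y\to Z$ is a Markov chain, then $I_{G,f}(X;YZ)=I_{G,f}(X;Y)$ and $I_{G,f}(XY;Z)=I_{G,f}(Y;Z)$.
   Context: All random variables take values in finite sets. $D_f(p\|q)=\sum_y q(y) f(p(y)/q(y))$ with $0f(0/0)=0$; $\mathsf{D_m}(f)=f(0)+\lim_{t\to\infty}f(t)/t$. $I_{G,f}(X;Y)=\min_{q_Y}\sum_x p_X(x)\,G(D_f(p_{Y|X=x}\|q_Y))$, minimum over distributions on the alphabet of $Y$. $X\to Y\to Z$ Markov means $X$ and $Z$ are conditionally independent given $Y$. *)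

theory Defs
  imports "HOL-Analysis.Analysis"
begin

definition is_dist :: "('a::finite \<Rightarrow> real) \<Rightarrow> bool" where
  "is_dist p \<longleftrightarrow> (\<forall>a. 0 \<le> p a) \<and> (\<Sum>a\<in>UNIV. p a) = 1"

text \<open>Slope at infinity  lim_{t\<rightarrow>\<infinity>} f(t)/t  (exists in the extended reals for convex f).\<close>
definition slope_inf :: "(real \<Rightarrow> real) \<Rightarrow> ereal" where
  "slope_inf f = Lim at_top (\<lambda>t. ereal (f t / t))"

definition Dm :: "(real \<Rightarrow> real) \<Rightarrow> ereal" where
  "Dm f = ereal (f 0) + slope_inf f"

definition fdiv :: "(real \<Rightarrow> real) \<Rightarrow> ('b::finite \<Rightarrow> real) \<Rightarrow> ('b \<Rightarrow> real) \<Rightarrow> ereal" where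
  "fdiv f p q = (\<Sum>y\<in>UNIV.
     (if q y > 0 then ereal (q y * f (p y / q y))
      else if p y = 0 then 0 else ereal (p y) * slope_inf f))"

text \<open>G is given on [0, D_m(f)); at arguments not below D_m(f) it is extended by its
  supremum (left limit, G being non-decreasing with G(0)=0).\<close>
definition Gext :: "(real \<Rightarrow> real) \<Rightarrow> (real \<Rightarrow> real) \<Rightarrow> ereal \<Rightarrow> ereal" where
  "Gext G f d = (if d < Dm f then ereal (G (real_of_ereal d))
      else (SUP t \<in> {0} \<union> {t. 0 \<le> t \<and> ereal t < Dm f}. ereal (G t)))"

text \<open>The conditional for p_A(a) = 0
  is irrelevant since it is weighted by 0 (and 0 * anything = 0 in ereal).\<close>
definition IGf :: "(real \<Rightarrow> real) \<Rightarrow> (real \<Rightarrow> real) \<Rightarrow> ('a::finite \<times> 'b::finite \<Rightarrow> real) \<Rightarrow> ereal" where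
  "IGf G f P = (INF q \<in> {q. is_dist q}.
      \<Sum>a\<in>UNIV. ereal (\<Sum>b\<in>UNIV. P (a, b)) *
         Gext G f (fdiv f (\<lambda>b. P (a, b) / (\<Sum>b'\<in>UNIV. P (a, b'))) q))"

text \<open>X \<rightarrow> Y \<rightarrow> Z Markov for a joint pmf P on X\<times>Y\<times>Z: X and Z conditionally independent given Y.\<close>
definition markov_chain :: "('x::finite \<times> 'y::finite \<times> 'z::finite \<Rightarrow> real) \<Rightarrow> bool" where
  "markov_chain P \<longleftrightarrow> (\<forall>x y z. P (x, y, z) * (\<Sum>x'\<in>UNIV. \<Sum>z'\<in>UNIV. P (x', y, z'))
      = (\<Sum>z'\<in>UNIV. P (x, y, z')) * (\<Sum>x'\<in>UNIV. P (x', y, z)))"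

end

theory Submission
  imports Defs
begin

lemma conv_chord:
  assumes cf: "convex_on {0..} f" and "0 \<le> x" "x < y" "y < z"
  shows "(f y - f x) / (y - x) \<le> (f z - f x) / (z - x)"
proof -
  define t where "t = (y - x) / (z - x)"
  have t0: "0 \<le> t" "t \<le> 1" using assms by (auto simp: t_def divide_simps)
  have tz: "t * (z - x) = y - x" using assms by (simp add: t_def)
  have ye: "(1 - t) *\<^sub>R x + t *\<^sub>R z = y"
  proof -
    have "(1 - t) *\<^sub>R x + t *\<^sub>R z = x + t * (z - x)" by (simp add: algebra_simps)
    thus ?thesis using tz by simp
  qed
  have "f y \<le> (1 - t) * f x + t * f z"
    using convex_onD[OF cf t0, of x z] assms ye by auto
  hence "f y - f x \<le> t * (f z - f x)" by (simp add: algebra_simps)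
  hence "(f y - f x) / (y - x) \<le> t * (f z - f x) / (y - x)"
    using assms by (simp add: divide_right_mono)
  also have "\<dots> = (f z - f x) * (t / (y - x))" by simp
  also have "t / (y - x) = 1 / (z - x)" using assms by (simp add: t_def)
  finally show ?thesis by simp
qed

lemma slope_tendsto:
  assumes cf: "convex_on {0..} f"
  shows "\<exists>L. ((\<lambda>t. ereal (f t / t)) \<longlongrightarrow> L) at_top"
proof -
  define g where "g t = (f t - f 0) / t" for t
  have gmono: "g a \<le> g b" if "0 < a" "a \<le> b" for a b
  proof (cases "a = b")
    case False
    then show ?thesis using conv_chord[OF cf, of 0 a b] that by (simp add: g_def)
  qed simp
  define L where "L = (SUP t\<in>{1..}. ereal (g t))"
  have fe: "f t / t = g t + f 0 / t" if "t > 0" for t using that by (simp add: g_def field_simps)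
  have "((\<lambda>t. ereal (f t / t)) \<longlongrightarrow> L) at_top"
  proof (rule order_tendstoI)
    fix y assume "y < L"
    then obtain t0 where t0: "t0 \<ge> 1" "y < ereal (g t0)" unfolding L_def by (auto simp: less_SUP_iff)
    show "\<forall>\<^sub>F t in at_top. y < ereal (f t / t)"
    proof (cases y)
      case (real r)
      define d where "d = g t0 - r"
      have d: "d > 0" using t0 real by (simp add: d_def)
      have "\<forall>t\<ge>max t0 (\<bar>f 0\<bar> / d + 1). y < ereal (f t / t)"
      proof (intro allI impI)
        fix t assume tt: "max t0 (\<bar>f 0\<bar> / d + 1) \<le> t"
        have tp: "t > 0" using tt t0 by auto
        have "\<bar>f 0\<bar> / d < t" using tt by auto
        hence "\<bar>f 0\<bar> < t * d" using d by (simp add: divide_less_eq mult.commute)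
        hence "\<bar>f 0\<bar> / t < d" using tp by (simp add: divide_less_eq mult.commute)
        moreover have "- (f 0) / t \<le> \<bar>f 0\<bar> / t" using tp by (intro divide_right_mono) auto
        ultimately have "- (f 0 / t) < d" by simp
        moreover have "g t0 \<le> g t" using gmono[of t0 t] tt t0 by auto
        ultimately have "r < f t / t" using fe[OF tp] by (simp add: d_def)
        thus "y < ereal (f t / t)" using real by simp
      qed
      thus ?thesis unfolding eventually_at_top_linorder by blast
    qed (use t0 in auto)
  next
    fix y assume yL: "L < y"
    have g1: "ereal (g 1) \<le> L" unfolding L_def by (rule SUP_upper) auto
    show "\<forall>\<^sub>F t in at_top. ereal (f t / t) < y"
    proof (cases y)
      case (real r)
      have "L \<noteq> \<infinity>" using yL real by auto
      moreover have "L \<noteq> -\<infinity>" using g1 by auto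
      ultimately obtain l where l: "L = ereal l" by (cases L) auto
      have gl: "g t \<le> l" if "t \<ge> 1" for t
        using that l unfolding L_def by (metis SUP_upper atLeast_iff ereal_less_eq(3))
      define d where "d = r - l"
      have d: "d > 0" using yL real l by (simp add: d_def)
      have "\<forall>t\<ge>max 1 (\<bar>f 0\<bar> / d + 1). ereal (f t / t) < y"
      proof (intro allI impI)
        fix t assume tt: "max 1 (\<bar>f 0\<bar> / d + 1) \<le> t"
        have tp: "t > 0" using tt by auto
        have "\<bar>f 0\<bar> / d < t" using tt by auto
        hence "\<bar>f 0\<bar> < t * d" using d by (simp add: divide_less_eq mult.commute)
        hence "\<bar>f 0\<bar> / t < d" using tp by (simp add: divide_less_eq mult.commute)
        moreover have "f 0 / t \<le> \<bar>f 0\<bar> / t" using tp by (intro divide_right_mono) auto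
        ultimately have "f 0 / t < d" by simp
        moreover have "g t \<le> l" using gl tt by auto
        ultimately have "f t / t < r" using fe[OF tp] by (simp add: d_def)
        thus "ereal (f t / t) < y" using real by simp
      qed
      thus ?thesis unfolding eventually_at_top_linorder by blast
    qed (use yL in auto)
  qed
  thus ?thesis by blast
qed

lemma slope_inf_tendsto:
  assumes cf: "convex_on {0..} f"
  shows "((\<lambda>t. ereal (f t / t)) \<longlongrightarrow> slope_inf f) at_top"
proof -
  obtain L where L: "((\<lambda>t. ereal (f t / t)) \<longlongrightarrow> L) at_top" using slope_tendsto[OF cf] by blast
  have "slope_inf f = L" unfolding slope_inf_def by (rule tendsto_Lim[OF _ L]) simp
  thus ?thesis using L by simp
qed

lemma slope_inf_ge:
  assumes cf: "convex_on {0..} f" and u: "0 \<le> u" and v: "0 < v"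
  shows "ereal ((f (u + v) - f u) / v) \<le> slope_inf f"
proof -
  define c where "c = (f (u + v) - f u) / v"
  have ev: "\<forall>\<^sub>F T in at_top. ereal (c + (f u - c * u) / T) \<le> ereal (f T / T)"
  proof -
    have "ereal (c + (f u - c * u) / T) \<le> ereal (f T / T)" if T: "T \<ge> u + v + 1" for T
    proof -
      have "c \<le> (f T - f u) / (T - u)"
        using conv_chord[OF cf u, of "u+v" T] v T by (simp add: c_def)
      hence "c * (T - u) \<le> f T - f u" using T v by (simp add: le_divide_eq)
      hence "c * T + (f u - c * u) \<le> f T" by (simp add: algebra_simps)
      hence "(c * T + (f u - c * u)) / T \<le> f T / T" using T u v by (simp add: divide_right_mono)
      moreover have "(c * T + (f u - c * u)) / T = c + (f u - c * u) / T" using T u v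
        by (simp add: field_simps)
      ultimately show ?thesis by simp
    qed
    thus ?thesis unfolding eventually_at_top_linorder by blast
  qed
  have lim: "((\<lambda>T. ereal (c + (f u - c * u) / T)) \<longlongrightarrow> ereal c) at_top"
  proof -
    have "((\<lambda>T. c + (f u - c * u) / T) \<longlongrightarrow> c + 0) at_top"
      by (intro tendsto_intros tendsto_divide_0[OF tendsto_const] filterlim_at_top_imp_at_infinity[OF filterlim_ident])
    thus ?thesis by (simp add: tendsto_ereal)
  qed
  show ?thesis unfolding c_def[symmetric]
    by (rule tendsto_le[OF trivial_limit_at_top_linorder slope_inf_tendsto[OF cf] lim ev])
qed

lemma slope_inf_not_minf:
  assumes cf: "convex_on {0..} f"
  shows "slope_inf f \<noteq> -\<infinity>"
  using slope_inf_ge[OF cf, of 0 1] by auto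


definition phi :: "(real \<Rightarrow> real) \<Rightarrow> ereal \<Rightarrow> real \<Rightarrow> real \<Rightarrow> ereal" where
  "phi f s a b = (if b > 0 then ereal (b * f (a / b)) else if a = 0 then 0 else ereal a * s)"

lemma fdiv_phi: "fdiv f p q = (\<Sum>y\<in>UNIV. phi f (slope_inf f) (p y) (q y))"
  by (simp add: fdiv_def phi_def)

lemma phi_b0: "phi f s a 0 = ereal a * s"
  by (simp add: phi_def zero_ereal_def[symmetric])

lemma ereal_sum_mult_nn:
  fixes k :: "'i \<Rightarrow> real"
  assumes "\<And>i. i \<in> A \<Longrightarrow> 0 \<le> k i"
  shows "(\<Sum>i\<in>A. ereal (k i) * x) = ereal (sum k A) * x"
proof -
  have "(\<Sum>i\<in>A. ereal (k i) * x) = (\<Sum>i\<in>A. ereal (k i)) * x"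
    using assms by (subst sum_ereal_left_distrib) auto
  thus ?thesis by (simp add: sum_ereal)
qed

lemma ereal_add_mult_nn:
  assumes "0 \<le> a" "0 \<le> b"
  shows "ereal (a + b) * x = ereal a * x + ereal b * x"
  using ereal_sum_mult_nn[of "{True, False}" "\<lambda>i. if i then a else b" x] assms by simp

lemma phi_homog:
  assumes "0 \<le> c" "0 \<le> a" "0 \<le> b"
  shows "phi f s (c * a) (c * b) = ereal c * phi f s a b"
proof (cases "c = 0")
  case True then show ?thesis by (simp add: phi_def zero_ereal_def[symmetric])
next
  case False
  hence c: "c > 0" using assms by simp
  show ?thesis
  proof (cases "b > 0")
    case True
    then show ?thesis using c by (simp add: phi_def)
  next
    case False
    hence "b = 0" using assms by simp
    then show ?thesis using c by (simp add: phi_b0 mult.assoc[symmetric])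
  qed
qed

lemma phi_subadd:
  assumes cf: "convex_on {0..} f"
    and a1: "0 \<le> a1" and a2: "0 \<le> a2" and b1: "0 \<le> b1" and b2: "0 \<le> b2"
  shows "phi f (slope_inf f) (a1 + a2) (b1 + b2)
    \<le> phi f (slope_inf f) a1 b1 + phi f (slope_inf f) a2 b2"
proof -
  let ?s = "slope_inf f"
  have key: "ereal (b * f ((a + a') / b)) \<le> ereal (b * f (a / b)) + ereal a' * ?s"
    if b: "b > 0" and a: "0 \<le> a" and a': "0 \<le> a'" for a a' b
  proof (cases "a' = 0")
    case True then show ?thesis by (simp add: zero_ereal_def[symmetric])
  next
    case False
    hence a'p: "a' > 0" using a' by simp
    show ?thesis
    proof (cases "?s")
      case (real r)
      have "ereal ((f (a / b + a' / b) - f (a / b)) / (a' / b)) \<le> ?s"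
        by (rule slope_inf_ge[OF cf]) (use a b a'p in auto)
      hence "(f (a / b + a' / b) - f (a / b)) / (a' / b) \<le> r" using real by simp
      moreover have ab: "a' / b > 0" using a'p b by simp
      ultimately have "f (a / b + a' / b) - f (a / b) \<le> r * (a' / b)"
        by (metis pos_divide_le_eq)
      hence "b * (f (a / b + a' / b) - f (a / b)) \<le> b * (r * (a' / b))"
        using b by (intro mult_left_mono) auto
      hence "b * f ((a + a') / b) \<le> b * f (a / b) + a' * r"
        using b by (simp add: algebra_simps add_divide_distrib)
      then show ?thesis using real by simp
    next
      case PInf then show ?thesis using a'p by simp
    next
      case MInf then show ?thesis using slope_inf_not_minf[OF cf] by simp
    qed
  qed
  show ?thesis
  proof (cases "b1 > 0")
    case b1p: True
    show ?thesis
    proof (cases "b2 > 0")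
      case b2p: True
      define t where "t = b2 / (b1 + b2)"
      have t: "0 \<le> t" "t \<le> 1" using b1p b2p by (auto simp: t_def)
      have t1: "1 - t = b1 / (b1 + b2)" using b1p b2p by (simp add: t_def field_simps)
      have pt: "(1 - t) *\<^sub>R (a1 / b1) + t *\<^sub>R (a2 / b2) = (a1 + a2) / (b1 + b2)"
        unfolding t1 using b1p b2p by (simp add: t_def add_divide_distrib)
      have "f ((a1 + a2) / (b1 + b2)) \<le> (1 - t) * f (a1 / b1) + t * f (a2 / b2)"
        using convex_onD[OF cf t, of "a1/b1" "a2/b2"] pt a1 a2 b1p b2p by simp
      hence "(b1 + b2) * f ((a1 + a2) / (b1 + b2))
          \<le> (b1 + b2) * ((1 - t) * f (a1 / b1) + t * f (a2 / b2))"
        using b1p b2p by (simp add: mult_left_mono)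
      also have "\<dots> = b1 * f (a1 / b1) + b2 * f (a2 / b2)"
        unfolding t1 using b1p b2p by (simp add: t_def distrib_left)
      finally show ?thesis using b1p b2p by (simp add: phi_def)
    next
      case False
      hence "b2 = 0" using b2 by simp
      then show ?thesis using key[OF b1p a1 a2] b1p by (simp add: phi_def phi_b0)
    qed
  next
    case False
    hence b10: "b1 = 0" using b1 by simp
    show ?thesis
    proof (cases "b2 > 0")
      case b2p: True
      then show ?thesis using key[OF b2p a2 a1] b10 by (simp add: phi_def phi_b0 add.commute)
    next
      case False
      hence "b2 = 0" using b2 by simp
      then show ?thesis using b10 ereal_add_mult_nn[OF a1 a2] by (simp add: phi_b0)
    qed
  qed
qed

lemma phi_sum:
  assumes cf: "convex_on {0..} f" and fin: "finite I"
    and a: "\<And>i. 0 \<le> a i" and b: "\<And>i. 0 \<le> b i"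
  shows "phi f (slope_inf f) (\<Sum>i\<in>I. a i) (\<Sum>i\<in>I. b i) \<le> (\<Sum>i\<in>I. phi f (slope_inf f) (a i) (b i))"
  using fin
proof (induction I rule: finite_induct)
  case empty then show ?case by (simp add: phi_b0 zero_ereal_def[symmetric])
next
  case (insert x F)
  have "phi f (slope_inf f) (\<Sum>i\<in>insert x F. a i) (\<Sum>i\<in>insert x F. b i)
      = phi f (slope_inf f) (a x + sum a F) (b x + sum b F)" using insert by simp
  also have "\<dots> \<le> phi f (slope_inf f) (a x) (b x) + phi f (slope_inf f) (sum a F) (sum b F)"
    by (rule phi_subadd[OF cf]) (auto intro: a b sum_nonneg)
  also have "\<dots> \<le> phi f (slope_inf f) (a x) (b x) + (\<Sum>i\<in>F. phi f (slope_inf f) (a i) (b i))"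
    using insert by (intro add_left_mono) auto
  finally show ?case using insert by simp
qed

lemma phi_dpi:
  fixes p q :: "'y::finite \<Rightarrow> real" and K :: "'y \<Rightarrow> 'z::finite \<Rightarrow> real"
  assumes cf: "convex_on {0..} f"
    and p: "\<And>y. 0 \<le> p y" and q: "\<And>y. 0 \<le> q y" and K: "\<And>y z. 0 \<le> K y z"
    and Ks: "\<And>y. (\<Sum>z\<in>UNIV. K y z) = 1"
  shows "(\<Sum>z\<in>UNIV. phi f (slope_inf f) (\<Sum>y\<in>UNIV. p y * K y z) (\<Sum>y\<in>UNIV. q y * K y z))
    \<le> (\<Sum>y\<in>UNIV. phi f (slope_inf f) (p y) (q y))"
proof -
  have "(\<Sum>z\<in>UNIV. phi f (slope_inf f) (\<Sum>y\<in>UNIV. p y * K y z) (\<Sum>y\<in>UNIV. q y * K y z))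
     \<le> (\<Sum>z\<in>UNIV. \<Sum>y\<in>UNIV. phi f (slope_inf f) (p y * K y z) (q y * K y z))"
    by (intro sum_mono phi_sum[OF cf]) (auto intro: mult_nonneg_nonneg p q K)
  also have "\<dots> = (\<Sum>z\<in>UNIV. \<Sum>y\<in>UNIV. ereal (K y z) * phi f (slope_inf f) (p y) (q y))"
    using phi_homog[OF K p q] by (simp add: mult.commute)
  also have "\<dots> = (\<Sum>y\<in>UNIV. \<Sum>z\<in>UNIV. ereal (K y z) * phi f (slope_inf f) (p y) (q y))"
    by (rule sum.swap)
  also have "\<dots> = (\<Sum>y\<in>UNIV. phi f (slope_inf f) (p y) (q y))"
    by (simp add: ereal_sum_mult_nn[OF K] Ks)
  finally show ?thesis .
qed

lemma fdiv_nonneg: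
  fixes p q :: "'y::finite \<Rightarrow> real"
  assumes cf: "convex_on {0..} f" and f1: "f 1 = 0"
    and p: "\<And>y. 0 \<le> p y" and q: "\<And>y. 0 \<le> q y"
    and ps: "(\<Sum>y\<in>UNIV. p y) = 1" and qs: "(\<Sum>y\<in>UNIV. q y) = 1"
  shows "0 \<le> fdiv f p q"
proof -
  have "phi f (slope_inf f) (\<Sum>y\<in>UNIV. p y) (\<Sum>y\<in>UNIV. q y) \<le> fdiv f p q"
    unfolding fdiv_phi by (rule phi_sum[OF cf _ p q]) simp
  thus ?thesis using ps qs f1 by (simp add: phi_def zero_ereal_def[symmetric])
qed


lemma Gext_mono:
  assumes G_mono: "\<And>a b. 0 \<le> a \<Longrightarrow> a \<le> b \<Longrightarrow> ereal b < Dm f \<Longrightarrow> G a \<le> G b"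
    and d1: "0 \<le> d1" and d12: "d1 \<le> d2"
  shows "Gext G f d1 \<le> Gext G f d2"
proof (cases "d2 < Dm f")
  case True
  hence d1l: "d1 < Dm f" using d12 by simp
  have "d2 \<noteq> \<infinity>" using True by auto
  moreover have "d2 \<noteq> -\<infinity>" "d1 \<noteq> -\<infinity>" "d1 \<noteq> \<infinity>" using d1 d12 d1l by auto
  ultimately obtain r1 r2 where r: "d1 = ereal r1" "d2 = ereal r2" by (cases d1; cases d2) auto
  show ?thesis using True d1l r d1 d12 by (auto simp: Gext_def intro: G_mono)
next
  case False
  show ?thesis
  proof (cases "d1 < Dm f")
    case True
    have "d1 \<noteq> \<infinity>" "d1 \<noteq> -\<infinity>" using True d1 by auto
    then obtain r1 where r: "d1 = ereal r1" by (cases d1) auto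
    have "ereal (G r1) \<le> (SUP t \<in> {0} \<union> {t. 0 \<le> t \<and> ereal t < Dm f}. ereal (G t))"
      by (rule SUP_upper) (use r True d1 in auto)
    then show ?thesis using True False r by (simp add: Gext_def)
  next
    case False
    then show ?thesis using \<open>\<not> d2 < Dm f\<close> by (simp add: Gext_def)
  qed
qed

lemma IGf_dpi:
  fixes P :: "'x::finite \<times> 'y::finite \<Rightarrow> real" and Q :: "'x \<times> 'z::finite \<Rightarrow> real"
    and K :: "'y \<Rightarrow> 'z \<Rightarrow> real"
  assumes cf: "convex_on {0..} f" and f1: "f 1 = 0"
    and G_mono: "\<And>a b. 0 \<le> a \<Longrightarrow> a \<le> b \<Longrightarrow> ereal b < Dm f \<Longrightarrow> G a \<le> G b"
    and P: "\<And>a. 0 \<le> P a" and K: "\<And>y z. 0 \<le> K y z" and Ks: "\<And>y. (\<Sum>z\<in>UNIV. K y z) = 1"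
    and Q: "\<And>x z. Q (x, z) = (\<Sum>y\<in>UNIV. P (x, y) * K y z)"
  shows "IGf G f Q \<le> IGf G f P"
  unfolding IGf_def
proof (rule INF_greatest)
  fix q :: "'y \<Rightarrow> real" assume "q \<in> {q. is_dist q}"
  hence q: "\<And>y. 0 \<le> q y" and qs: "(\<Sum>y\<in>UNIV. q y) = 1" by (auto simp: is_dist_def)
  define q' where "q' z = (\<Sum>y\<in>UNIV. q y * K y z)" for z
  have q'd: "is_dist q'"
  proof -
    have "(\<Sum>z\<in>UNIV. q' z) = (\<Sum>y\<in>UNIV. q y * (\<Sum>z\<in>UNIV. K y z))"
      unfolding q'_def by (subst sum.swap) (simp add: sum_distrib_left)
    thus ?thesis using q K Ks qs by (auto simp: is_dist_def q'_def intro: sum_nonneg)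
  qed
  have q'n: "\<And>z. 0 \<le> q' z" and q's: "(\<Sum>z\<in>UNIV. q' z) = 1" using q'd by (auto simp: is_dist_def)
  have "(INF q\<in>{q. is_dist q}. \<Sum>a\<in>UNIV. ereal (\<Sum>b\<in>UNIV. Q (a, b)) *
         Gext G f (fdiv f (\<lambda>b. Q (a, b) / (\<Sum>b'\<in>UNIV. Q (a, b'))) q))
     \<le> (\<Sum>a\<in>UNIV. ereal (\<Sum>b\<in>UNIV. Q (a, b)) *
         Gext G f (fdiv f (\<lambda>b. Q (a, b) / (\<Sum>b'\<in>UNIV. Q (a, b'))) q'))"
    by (rule INF_lower) (use q'd in simp)
  also have "\<dots> \<le> (\<Sum>a\<in>UNIV. ereal (\<Sum>b\<in>UNIV. P (a, b)) *
         Gext G f (fdiv f (\<lambda>b. P (a, b) / (\<Sum>b'\<in>UNIV. P (a, b'))) q))"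
  proof (rule sum_mono)
    fix x :: 'x
    define r where "r = (\<Sum>b\<in>UNIV. P (x, b))"
    have rQ: "(\<Sum>b\<in>UNIV. Q (x, b)) = r"
    proof -
      have "(\<Sum>b\<in>UNIV. Q (x, b)) = (\<Sum>y\<in>UNIV. P (x, y) * (\<Sum>z\<in>UNIV. K y z))"
        unfolding Q by (subst sum.swap) (simp add: sum_distrib_left)
      thus ?thesis using Ks by (simp add: r_def)
    qed
    have r0: "0 \<le> r" unfolding r_def by (intro sum_nonneg P)
    show "ereal (\<Sum>b\<in>UNIV. Q (x, b)) * Gext G f (fdiv f (\<lambda>b. Q (x, b) / (\<Sum>b'\<in>UNIV. Q (x, b'))) q')
        \<le> ereal (\<Sum>b\<in>UNIV. P (x, b)) * Gext G f (fdiv f (\<lambda>b. P (x, b) / (\<Sum>b'\<in>UNIV. P (x, b'))) q)"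
    proof (cases "r = 0")
      case True
      then show ?thesis using rQ by (simp add: r_def zero_ereal_def[symmetric])
    next
      case False
      hence rp: "r > 0" using r0 by simp
      define c where "c y = P (x, y) / r" for y
      have cn: "\<And>y. 0 \<le> c y" unfolding c_def using P r0 by simp
      have condQ: "(\<lambda>b. Q (x, b) / (\<Sum>b'\<in>UNIV. Q (x, b'))) = (\<lambda>z. \<Sum>y\<in>UNIV. c y * K y z)"
        unfolding rQ by (simp add: Q c_def sum_divide_distrib)
      have condP: "(\<lambda>b. P (x, b) / (\<Sum>b'\<in>UNIV. P (x, b'))) = c"
        unfolding c_def r_def by simp
      have le: "fdiv f (\<lambda>z. \<Sum>y\<in>UNIV. c y * K y z) q' \<le> fdiv f c q"
        unfolding fdiv_phi q'_def by (rule phi_dpi[OF cf cn q K Ks])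
      have cQn: "\<And>z. 0 \<le> (\<Sum>y\<in>UNIV. c y * K y z)" using cn K by (simp add: sum_nonneg)
      have cQs: "(\<Sum>z\<in>UNIV. \<Sum>y\<in>UNIV. c y * K y z) = 1"
      proof -
        have "(\<Sum>z\<in>UNIV. \<Sum>y\<in>UNIV. c y * K y z) = (\<Sum>b\<in>UNIV. Q (x, b)) / r"
          unfolding Q c_def by (simp add: sum_divide_distrib)
        thus ?thesis using rQ rp by simp
      qed
      have nn: "0 \<le> fdiv f (\<lambda>z. \<Sum>y\<in>UNIV. c y * K y z) q'"
        by (rule fdiv_nonneg[OF cf f1 cQn q'n cQs q's])
      have r0e: "0 \<le> ereal r" using r0 by simp
      have gm: "Gext G f (fdiv f (\<lambda>z. \<Sum>y\<in>UNIV. c y * K y z) q') \<le> Gext G f (fdiv f c q)"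
        using Gext_mono[of f G, OF _ nn le] G_mono by blast
      show ?thesis unfolding condQ condP unfolding rQ r_def[symmetric]
        by (rule ereal_mult_left_mono[OF gm r0e])
    qed
  qed
  finally show "(INF q\<in>{q. is_dist q}. \<Sum>a\<in>UNIV. ereal (\<Sum>b\<in>UNIV. Q (a, b)) *
         Gext G f (fdiv f (\<lambda>b. Q (a, b) / (\<Sum>b'\<in>UNIV. Q (a, b'))) q))
     \<le> (\<Sum>a\<in>UNIV. ereal (\<Sum>b\<in>UNIV. P (a, b)) *
         Gext G f (fdiv f (\<lambda>b. P (a, b) / (\<Sum>b'\<in>UNIV. P (a, b'))) q))" .
qed


lemma sum_UNIV_prod:
  fixes h :: "'a::finite \<times> 'b::finite \<Rightarrow> 'c::comm_monoid_add"
  shows "(\<Sum>b\<in>UNIV. h b) = (\<Sum>y\<in>UNIV. \<Sum>z\<in>UNIV. h (y, z))"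
  by (simp add: sum.cartesian_product UNIV_Times_UNIV[symmetric] del: UNIV_Times_UNIV)

lemma sum_if_cond: "(\<Sum>z\<in>A. if c then h z else 0) = (if c then sum h A else 0)"
  by (cases c) simp_all

lemma markov_kernel:
  fixes P :: "'x::finite \<times> 'y::finite \<times> 'z::finite \<Rightarrow> real"
  assumes Pd: "is_dist P" and M: "markov_chain P"
  shows "\<exists>K. (\<forall>y z. 0 \<le> K y z) \<and> (\<forall>y. (\<Sum>z\<in>UNIV. K y z) = 1)
    \<and> (\<forall>x y z. P (x, y, z) = (\<Sum>z'\<in>UNIV. P (x, y, z')) * K y z)"
proof -
  have P0: "\<And>a. 0 \<le> P a" using Pd unfolding is_dist_def by blast
  define PY where "PY y = (\<Sum>x'\<in>UNIV. \<Sum>z'\<in>UNIV. P (x', y, z'))" for y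
  define K where "K y z = (if PY y > 0 then (\<Sum>x\<in>UNIV. P (x, y, z)) / PY y
      else 1 / real CARD('z))" for y z
  have PY0: "0 \<le> PY y" for y unfolding PY_def by (intro sum_nonneg P0)
  have Kn: "\<forall>y z. 0 \<le> K y z" unfolding K_def using PY0 by (auto intro!: sum_nonneg divide_nonneg_nonneg P0)
  have Ks: "\<forall>y. (\<Sum>z\<in>UNIV. K y z) = 1"
  proof
    fix y
    show "(\<Sum>z\<in>UNIV. K y z) = 1"
    proof (cases "PY y > 0")
      case True
      have "(\<Sum>z\<in>UNIV. \<Sum>x\<in>UNIV. P (x, y, z)) = PY y" unfolding PY_def by (rule sum.swap)
      then show ?thesis using True unfolding K_def by (simp add: sum_divide_distrib[symmetric])
    next
      case False
      then show ?thesis unfolding K_def by simp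
    qed
  qed
  have KP: "\<forall>x y z. P (x, y, z) = (\<Sum>z'\<in>UNIV. P (x, y, z')) * K y z"
  proof (intro allI)
    fix x y z
    show "P (x, y, z) = (\<Sum>z'\<in>UNIV. P (x, y, z')) * K y z"
    proof (cases "PY y > 0")
      case True
      have "P (x, y, z) * PY y = (\<Sum>z'\<in>UNIV. P (x, y, z')) * (\<Sum>x'\<in>UNIV. P (x', y, z))"
        using M unfolding markov_chain_def PY_def by blast
      then show ?thesis using True unfolding K_def by (simp add: field_simps)
    next
      case False
      hence "PY y = 0" using PY0[of y] by simp
      hence "\<forall>x'\<in>UNIV. (\<Sum>z'\<in>UNIV. P (x', y, z')) = 0" unfolding PY_def
        by (subst (asm) sum_nonneg_eq_0_iff) (auto intro: sum_nonneg P0)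
      hence a: "(\<Sum>z'\<in>UNIV. P (x, y, z')) = 0" by simp
      hence "P (x, y, z) = 0" by (subst (asm) sum_nonneg_eq_0_iff) (auto intro: P0)
      then show ?thesis using a by simp
    qed
  qed
  show ?thesis using Kn Ks KP by blast
qed

lemma IGf_channel:
  fixes W :: "'x::finite \<Rightarrow> 'y::finite \<Rightarrow> real"
  assumes W: "\<forall>x. is_dist (W x)" and p: "\<And>x. 0 \<le> p x"
  shows "IGf G f (\<lambda>(x, y). p x * W x y)
    = (INF q\<in>{q. is_dist q}. \<Sum>x\<in>UNIV. ereal (p x) * Gext G f (fdiv f (W x) q))"
  unfolding IGf_def
proof (rule INF_cong[OF refl], rule sum.cong[OF refl])
  fix q x
  have Ws: "(\<Sum>b\<in>UNIV. W x b) = 1" using W by (simp add: is_dist_def)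
  have row: "(\<Sum>b\<in>UNIV. p x * W x b) = p x" by (simp add: sum_distrib_left[symmetric] Ws)
  show "ereal (\<Sum>b\<in>UNIV. case (x, b) of (x, y) \<Rightarrow> p x * W x y) *
         Gext G f (fdiv f (\<lambda>b. (case (x, b) of (x, y) \<Rightarrow> p x * W x y) /
           (\<Sum>b'\<in>UNIV. case (x, b') of (x, y) \<Rightarrow> p x * W x y)) q)
       = ereal (p x) * Gext G f (fdiv f (W x) q)"
  proof (cases "p x = 0")
    case True then show ?thesis by (simp add: zero_ereal_def[symmetric])
  next
    case False
    then show ?thesis by (simp add: row)
  qed
qed

lemma IGf_merge:
  fixes A :: "('x::finite \<times> 'y::finite) \<times> 'z::finite \<Rightarrow> real" and B :: "'y \<times> 'z \<Rightarrow> real"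
    and R :: "'x \<Rightarrow> 'y \<Rightarrow> real" and K :: "'y \<Rightarrow> 'z \<Rightarrow> real"
  assumes R0: "\<And>x y. 0 \<le> R x y" and Ks: "\<And>y. (\<Sum>z\<in>UNIV. K y z) = 1"
    and A: "\<And>x y z. A ((x, y), z) = R x y * K y z"
    and B: "\<And>y z. B (y, z) = (\<Sum>x\<in>UNIV. R x y) * K y z"
  shows "IGf G f A = IGf G f B"
  unfolding IGf_def
proof (rule INF_cong[OF refl])
  fix q :: "'z \<Rightarrow> real"
  define S where "S y = (\<Sum>x\<in>UNIV. R x y)" for y
  have S0: "0 \<le> S y" for y unfolding S_def by (intro sum_nonneg R0)
  define h where "h y = Gext G f (fdiv f (K y) q)" for y
  have L: "(\<Sum>a\<in>UNIV. ereal (\<Sum>b\<in>UNIV. A (a, b)) *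
      Gext G f (fdiv f (\<lambda>b. A (a, b) / (\<Sum>b'\<in>UNIV. A (a, b'))) q))
    = (\<Sum>x\<in>UNIV. \<Sum>y\<in>UNIV. ereal (R x y) * h y)"
    unfolding sum_UNIV_prod[where h = "\<lambda>a. ereal (\<Sum>b\<in>UNIV. A (a, b)) *
      Gext G f (fdiv f (\<lambda>b. A (a, b) / (\<Sum>b'\<in>UNIV. A (a, b'))) q)"]
  proof (intro sum.cong refl)
    fix x y
    have row: "(\<Sum>b\<in>UNIV. A ((x, y), b)) = R x y"
      unfolding A by (simp add: sum_distrib_left[symmetric] Ks)
    show "ereal (\<Sum>b\<in>UNIV. A ((x, y), b)) *
      Gext G f (fdiv f (\<lambda>b. A ((x, y), b) / (\<Sum>b'\<in>UNIV. A ((x, y), b'))) q)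
      = ereal (R x y) * h y"
    proof (cases "R x y = 0")
      case True then show ?thesis unfolding row by (simp add: zero_ereal_def[symmetric])
    next
      case False
      have c: "(\<lambda>b. A ((x, y), b) / R x y) = K y" using False by (simp add: A)
      show ?thesis unfolding row c h_def ..
    qed
  qed
  have Rr: "ereal (\<Sum>b\<in>UNIV. B (y, b)) *
      Gext G f (fdiv f (\<lambda>b. B (y, b) / (\<Sum>b'\<in>UNIV. B (y, b'))) q) = ereal (S y) * h y" for y
  proof -
    have row: "(\<Sum>b\<in>UNIV. B (y, b)) = S y"
      unfolding B S_def[symmetric] by (simp add: sum_distrib_left[symmetric] Ks)
    show ?thesis
    proof (cases "S y = 0")
      case True then show ?thesis unfolding row by (simp add: zero_ereal_def[symmetric])
    next
      case False
      have c: "(\<lambda>b. B (y, b) / S y) = K y" using False by (simp add: B S_def[symmetric])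
      show ?thesis unfolding row c h_def ..
    qed
  qed
  have "(\<Sum>x\<in>UNIV. \<Sum>y\<in>UNIV. ereal (R x y) * h y) = (\<Sum>y\<in>UNIV. \<Sum>x\<in>UNIV. ereal (R x y) * h y)"
    by (rule sum.swap)
  also have "\<dots> = (\<Sum>y\<in>UNIV. ereal (S y) * h y)"
    unfolding S_def using R0 by (simp add: ereal_sum_mult_nn)
  finally show "(\<Sum>a\<in>UNIV. ereal (\<Sum>b\<in>UNIV. A (a, b)) *
      Gext G f (fdiv f (\<lambda>b. A (a, b) / (\<Sum>b'\<in>UNIV. A (a, b'))) q))
    = (\<Sum>a\<in>UNIV. ereal (\<Sum>b\<in>UNIV. B (a, b)) *
      Gext G f (fdiv f (\<lambda>b. B (a, b) / (\<Sum>b'\<in>UNIV. B (a, b'))) q))"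
    unfolding L using Rr by simp
qed

theorem lemma2:
  fixes f :: "real \<Rightarrow> real" and G :: "real \<Rightarrow> real"
  assumes f_convex: "convex_on {0..} f"
    and f1: "f 1 = 0"
    and G_mono: "\<And>a b. 0 \<le> a \<Longrightarrow> a \<le> b \<Longrightarrow> ereal b < Dm f \<Longrightarrow> G a \<le> G b"
    and G_nonneg: "\<And>a. 0 \<le> a \<Longrightarrow> ereal a < Dm f \<Longrightarrow> 0 \<le> G a"
    and G0: "G 0 = 0"
  shows
    "(\<forall>(W :: 'x::finite \<Rightarrow> 'y::finite \<Rightarrow> real) p1 p2 (l :: real).
        (\<forall>x. is_dist (W x)) \<longrightarrow> is_dist p1 \<longrightarrow> is_dist p2 \<longrightarrow> 0 \<le> l \<longrightarrow> l \<le> 1 \<longrightarrow>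
        ereal l * IGf G f (\<lambda>(x, y). p1 x * W x y)
          + ereal (1 - l) * IGf G f (\<lambda>(x, y). p2 x * W x y)
        \<le> IGf G f (\<lambda>(x, y). (l * p1 x + (1 - l) * p2 x) * W x y))
     \<and> (\<forall>P :: 'x \<times> 'y \<times> 'z::finite \<Rightarrow> real. is_dist P \<longrightarrow> markov_chain P \<longrightarrow>
          IGf G f (\<lambda>(x, z). \<Sum>y\<in>UNIV. P (x, y, z))
            \<le> IGf G f (\<lambda>(x, y). \<Sum>z\<in>UNIV. P (x, y, z)))
     \<and> (\<forall>P :: 'x \<times> 'y \<times> 'z \<Rightarrow> real. is_dist P \<longrightarrow> markov_chain P \<longrightarrow>
          IGf G f P = IGf G f (\<lambda>(x, y). \<Sum>z\<in>UNIV. P (x, y, z))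
          \<and> IGf G f (\<lambda>((x, y), z). P (x, y, z)) = IGf G f (\<lambda>(y, z). \<Sum>x\<in>UNIV. P (x, y, z)))"
proof (intro conjI allI impI)
  note cf = f_convex
  have Gm: "\<And>a b. 0 \<le> a \<Longrightarrow> a \<le> b \<Longrightarrow> ereal b < Dm f \<Longrightarrow> G a \<le> G b" by (rule G_mono)
  fix W :: "'x \<Rightarrow> 'y \<Rightarrow> real" and p1 p2 :: "'x \<Rightarrow> real" and l :: real
  assume W: "\<forall>x. is_dist (W x)" and d1: "is_dist p1" and d2: "is_dist p2"
    and l0: "0 \<le> l" and l1: "l \<le> 1"
  have p1: "\<And>x. 0 \<le> p1 x" and p2: "\<And>x. 0 \<le> p2 x" using d1 d2 by (auto simp: is_dist_def)
  have pm: "\<And>x. 0 \<le> l * p1 x + (1 - l) * p2 x" using p1 p2 l0 l1 by (simp add: add_nonneg_nonneg)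
  define g where "g q x = Gext G f (fdiv f (W x) q)" for q x
  have "ereal l * (INF q\<in>{q. is_dist q}. \<Sum>x\<in>UNIV. ereal (p1 x) * g q x)
      + ereal (1 - l) * (INF q\<in>{q. is_dist q}. \<Sum>x\<in>UNIV. ereal (p2 x) * g q x)
      \<le> (INF q\<in>{q. is_dist q}. \<Sum>x\<in>UNIV. ereal (l * p1 x + (1 - l) * p2 x) * g q x)"
  proof (rule INF_greatest)
    fix q :: "'y \<Rightarrow> real" assume qd: "q \<in> {q. is_dist q}"
    have m1: "ereal l * (INF q\<in>{q. is_dist q}. \<Sum>x\<in>UNIV. ereal (p1 x) * g q x)
        \<le> ereal l * (\<Sum>x\<in>UNIV. ereal (p1 x) * g q x)"
      by (rule ereal_mult_left_mono) (use qd l0 in \<open>auto intro!: INF_lower\<close>)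
    have m2: "ereal (1 - l) * (INF q\<in>{q. is_dist q}. \<Sum>x\<in>UNIV. ereal (p2 x) * g q x)
        \<le> ereal (1 - l) * (\<Sum>x\<in>UNIV. ereal (p2 x) * g q x)"
      by (rule ereal_mult_left_mono) (use qd l1 in \<open>auto intro!: INF_lower\<close>)
    have eq: "ereal l * (\<Sum>x\<in>UNIV. ereal (p1 x) * g q x)
        + ereal (1 - l) * (\<Sum>x\<in>UNIV. ereal (p2 x) * g q x)
        = (\<Sum>x\<in>UNIV. ereal (l * p1 x + (1 - l) * p2 x) * g q x)"
    proof -
      have a: "ereal c * (\<Sum>x\<in>UNIV. ereal (p x) * g q x) = (\<Sum>x\<in>UNIV. ereal (c * p x) * g q x)"
        if "0 \<le> c" for c and p :: "'x \<Rightarrow> real"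
      proof -
        have "ereal c * (\<Sum>x\<in>UNIV. ereal (p x) * g q x) = (\<Sum>x\<in>UNIV. ereal (p x) * g q x) * ereal c"
          by (simp add: mult.commute)
        also have "\<dots> = (\<Sum>x\<in>UNIV. ereal (p x) * g q x * ereal c)"
          by (rule sum_distrib_right_ereal[OF that])
        also have "\<dots> = (\<Sum>x\<in>UNIV. ereal (c * p x) * g q x)"
          by (rule sum.cong) (simp_all only: times_ereal.simps(1)[symmetric] mult_ac)
        finally show ?thesis .
      qed
      have l1': "0 \<le> 1 - l" using l1 by simp
      have "ereal l * (\<Sum>x\<in>UNIV. ereal (p1 x) * g q x)
        + ereal (1 - l) * (\<Sum>x\<in>UNIV. ereal (p2 x) * g q x)
        = (\<Sum>x\<in>UNIV. ereal (l * p1 x) * g q x) + (\<Sum>x\<in>UNIV. ereal ((1 - l) * p2 x) * g q x)"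
        by (simp only: a[OF l0] a[OF l1'])
      also have "\<dots> = (\<Sum>x\<in>UNIV. ereal (l * p1 x) * g q x + ereal ((1 - l) * p2 x) * g q x)"
        by (rule sum.distrib[symmetric])
      also have "\<dots> = (\<Sum>x\<in>UNIV. ereal (l * p1 x + (1 - l) * p2 x) * g q x)"
      proof (rule sum.cong[OF refl])
        fix x
        show "ereal (l * p1 x) * g q x + ereal ((1 - l) * p2 x) * g q x
          = ereal (l * p1 x + (1 - l) * p2 x) * g q x"
          by (rule ereal_add_mult_nn[symmetric]) (use l0 l1' p1 p2 in auto)
      qed
      finally show ?thesis .
    qed
    show "ereal l * (INF q\<in>{q. is_dist q}. \<Sum>x\<in>UNIV. ereal (p1 x) * g q x)
      + ereal (1 - l) * (INF q\<in>{q. is_dist q}. \<Sum>x\<in>UNIV. ereal (p2 x) * g q x)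
      \<le> (\<Sum>x\<in>UNIV. ereal (l * p1 x + (1 - l) * p2 x) * g q x)"
      by (rule order_trans[OF add_mono[OF m1 m2] eq[THEN eq_refl]])
  qed
  then show "ereal l * IGf G f (\<lambda>(x, y). p1 x * W x y)
          + ereal (1 - l) * IGf G f (\<lambda>(x, y). p2 x * W x y)
        \<le> IGf G f (\<lambda>(x, y). (l * p1 x + (1 - l) * p2 x) * W x y)"
    unfolding IGf_channel[OF W p1] IGf_channel[OF W p2] IGf_channel[OF W pm] g_def .
next
  fix P :: "'x \<times> 'y \<times> 'z \<Rightarrow> real"
  assume Pd: "is_dist P" and M: "markov_chain P"
  have P0: "\<And>a. 0 \<le> P a" using Pd unfolding is_dist_def by blast
  obtain K where Kn: "\<forall>y z. 0 \<le> K y z" and Ks: "\<forall>y. (\<Sum>z\<in>UNIV. K y z) = 1"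
    and KP: "\<forall>x y z. P (x, y, z) = (\<Sum>z'\<in>UNIV. P (x, y, z')) * K y z"
    using markov_kernel[OF Pd M] by blast
  show "IGf G f (\<lambda>(x, z). \<Sum>y\<in>UNIV. P (x, y, z)) \<le> IGf G f (\<lambda>(x, y). \<Sum>z\<in>UNIV. P (x, y, z))"
  proof (rule IGf_dpi[OF f_convex f1 G_mono, where K = K])
    show "\<And>a. 0 \<le> (case a of (x, y) \<Rightarrow> \<Sum>z\<in>UNIV. P (x, y, z))"
      by (auto intro: sum_nonneg P0)
    show "\<And>y z. 0 \<le> K y z" using Kn by blast
    show "\<And>y. (\<Sum>z\<in>UNIV. K y z) = 1" using Ks by blast
    show "\<And>x z. (case (x, z) of (x, z) \<Rightarrow> \<Sum>y\<in>UNIV. P (x, y, z)) =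
        (\<Sum>y\<in>UNIV. (case (x, y) of (x, y) \<Rightarrow> \<Sum>z\<in>UNIV. P (x, y, z)) * K y z)"
    proof -
      fix x z
      have "P (x, y, z) = (\<Sum>z'\<in>UNIV. P (x, y, z')) * K y z" for y using KP by blast
      thus "(case (x, z) of (x, z) \<Rightarrow> \<Sum>y\<in>UNIV. P (x, y, z)) =
        (\<Sum>y\<in>UNIV. (case (x, y) of (x, y) \<Rightarrow> \<Sum>z\<in>UNIV. P (x, y, z)) * K y z)"
        by simp
    qed
  qed
next
  fix P :: "'x \<times> 'y \<times> 'z \<Rightarrow> real"
  assume Pd: "is_dist P" and M: "markov_chain P"
  have P0: "\<And>a. 0 \<le> P a" using Pd unfolding is_dist_def by blast
  obtain K where Kn: "\<forall>y z. 0 \<le> K y z" and Ks: "\<forall>y. (\<Sum>z\<in>UNIV. K y z) = 1"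
    and KP: "\<forall>x y z. P (x, y, z) = (\<Sum>z'\<in>UNIV. P (x, y, z')) * K y z"
    using markov_kernel[OF Pd M] by blast
  have PXY0: "\<And>a. 0 \<le> (case a of (x, y) \<Rightarrow> \<Sum>z\<in>UNIV. P (x, y, z))"
    by (auto intro: sum_nonneg P0)
  have A: "IGf G f P \<le> IGf G f (\<lambda>(x, y). \<Sum>z\<in>UNIV. P (x, y, z))"
  proof (rule IGf_dpi[OF f_convex f1 G_mono PXY0, where K = "\<lambda>y b. if fst b = y then K y (snd b) else 0"])
    show "\<And>y b. 0 \<le> (if fst b = y then K y (snd b) else 0)" using Kn by auto
    show "(\<Sum>b\<in>UNIV. if fst b = y then K y (snd b) else 0) = 1" for y
    proof -
      have "(\<Sum>b\<in>UNIV. if fst b = y then K y (snd b) else 0)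
          = (\<Sum>y'\<in>UNIV. \<Sum>z\<in>UNIV. if y' = y then K y z else 0)"
        by (subst sum_UNIV_prod) (simp only: snd_conv fst_conv)
      also have "\<dots> = (\<Sum>z\<in>UNIV. K y z)"
        by (subst sum.swap) simp
      finally show ?thesis using Ks by simp
    qed
    show "\<And>x b. P (x, b) = (\<Sum>y\<in>UNIV. (case (x, y) of (x, y) \<Rightarrow> \<Sum>z\<in>UNIV. P (x, y, z)) *
        (if fst b = y then K y (snd b) else 0))"
    proof -
      fix x and b :: "'y \<times> 'z"
      obtain y' z where b: "b = (y', z)" by (cases b)
      have "(\<Sum>y\<in>UNIV. (case (x, y) of (x, y) \<Rightarrow> \<Sum>z\<in>UNIV. P (x, y, z)) *
        (if fst b = y then K y (snd b) else 0))
          = (\<Sum>y\<in>UNIV. if y' = y then (\<Sum>z\<in>UNIV. P (x, y, z)) * K y z else 0)"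
        unfolding b by (rule sum.cong) auto
      also have "\<dots> = (\<Sum>z\<in>UNIV. P (x, y', z)) * K y' z" by simp
      also have "\<dots> = P (x, b)" unfolding b using KP by metis
      finally show "P (x, b) = (\<Sum>y\<in>UNIV. (case (x, y) of (x, y) \<Rightarrow> \<Sum>z\<in>UNIV. P (x, y, z)) *
        (if fst b = y then K y (snd b) else 0))" by simp
    qed
  qed
  have B: "IGf G f (\<lambda>(x, y). \<Sum>z\<in>UNIV. P (x, y, z)) \<le> IGf G f P"
  proof (rule IGf_dpi[OF f_convex f1 G_mono P0, where K = "\<lambda>(b :: 'y \<times> 'z) (y :: 'y). if fst b = y then 1 else 0"])
    show "\<And>(b :: 'y \<times> 'z) (y :: 'y). 0 \<le> (if fst b = y then 1 else 0 :: real)" by auto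
    show "\<And>b :: 'y \<times> 'z. (\<Sum>y\<in>UNIV. if fst b = y then 1 else 0 :: real) = 1" by simp
    show "\<And>x y. (case (x, y) of (x, y) \<Rightarrow> \<Sum>z\<in>UNIV. P (x, y, z))
        = (\<Sum>b\<in>UNIV. P (x, b) * (if fst b = (y :: 'y) then 1 else 0))"
      by (simp add: sum_UNIV_prod if_distrib sum_if_cond cong: if_cong)
  qed
  show "IGf G f P = IGf G f (\<lambda>(x, y). \<Sum>z\<in>UNIV. P (x, y, z))" using A B by simp
next
  fix P :: "'x \<times> 'y \<times> 'z \<Rightarrow> real"
  assume Pd: "is_dist P" and M: "markov_chain P"
  have P0: "\<And>a. 0 \<le> P a" using Pd unfolding is_dist_def by blast
  obtain K where Kn: "\<forall>y z. 0 \<le> K y z" and Ks: "\<forall>y. (\<Sum>z\<in>UNIV. K y z) = 1"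
    and KP: "\<forall>x y z. P (x, y, z) = (\<Sum>z'\<in>UNIV. P (x, y, z')) * K y z"
    using markov_kernel[OF Pd M] by blast
  define R where "R x y = (\<Sum>z\<in>UNIV. P (x, y, z))" for x y
  have R0: "0 \<le> R x y" for x y unfolding R_def by (intro sum_nonneg P0)
  define S where "S y = (\<Sum>x\<in>UNIV. R x y)" for y
  have S0: "0 \<le> S y" for y unfolding S_def by (intro sum_nonneg R0)
  have PK: "P (x, y, z) = R x y * K y z" for x y z unfolding R_def using KP by blast
  have SK: "(\<Sum>x\<in>UNIV. P (x, y, z)) = S y * K y z" for y z
    unfolding S_def PK by (simp add: sum_distrib_right)
  have SS: "(\<Sum>z\<in>UNIV. \<Sum>x\<in>UNIV. P (x, y, z)) = S y" for y
    unfolding SK using Ks by (simp add: sum_distrib_left[symmetric])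
  show "IGf G f (\<lambda>((x, y), z). P (x, y, z)) = IGf G f (\<lambda>(y, z). \<Sum>x\<in>UNIV. P (x, y, z))"
    by (rule IGf_merge[where R = R and K = K]) (use R0 Ks PK SK S_def in auto)
qed

end
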